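(* Suppose $\Pi$ is Klingen-ordinary at $p$ and we are in Case B, with $(t_1, t_2) = (0, r_1 - r_2)$. If one of the pairwise products $\{ \alpha \mathfrak{a}_2, \dots, \delta \mathfrak{b}_2\}$ is equal to $p^{r_1 + 2}$, then $\Pi$ must in fact be Borel-ordinary at $p$, $\Sigma_2$ is ordinary at $p$, and the ``bad'' eigenvalue is either $\beta \mathfrak{b}_2$ or $\gamma \mathfrak{a}_2$ (or possibly both) where $\alpha$ and $\mathfrak{a}_2$ are the unit eigenvalues.
   Context: $\Pi$ is a non-endoscopic, non-CAP cuspidal automorphic representation of $\mathrm{GSp}_4$, discrete series at $\infty$ of weight $(r_1+3, r_2+3)$ with $r_1 \ge r_2 \ge 0$, unramified at $p$. Its Hecke parameters $\alpha,\beta,\gamma,\delta$ at $p$ (of $\Pi_p' = \Pi_p \otimes \|\cdot\|^{-(r_1+r_2)/2}$) all have complex absolute value $p^{(r_1+r_2+3)/2}$, satisfy $\alpha\delta = \beta\gamma = p^{r_1+r_2+3}\chi_\Pi(p)$ (with $\chi_\Pi(p)$ a root of unity), and are ordered so that $v_p(\alpha) \le v_p(\beta) \le v_p(\gamma) \le v_p(\delta)$; then $v_p(\alpha)\ge 0$, $v_p(\alpha\beta)\ge r_2+1$. $\Pi$ is Siegel-ordinary if $v_p(\alpha)=0$, Klingen-ordinary if $v_p(\alpha\beta)=r_2+1$, Borel-ordinary if both. Case B: additionally $\Sigma_2$ is a cuspidal automorphic representation of $\mathrm{GL}_2$ generated by a holomorphic newform of weight $t_2+2$, unramified at $p$, with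 Hecke parameters $\mathfrak{a}_2,\mathfrak{b}_2$ (of $\Sigma_{2,p}' = \Sigma_{2,p}\otimes\|\cdot\|^{-t_2/2}$) of complex absolute value $p^{(t_2+1)/2}$ and $\mathfrak{a}_2\mathfrak{b}_2 = p^{t_2+1}\chi_{\Sigma_2}(p)$; one studies $\Pi\boxtimes\Sigma_2$ on $\mathrm{GSp}_4\times\mathrm{GL}_2$. Here $t_1 \ge 0$ is an integer such that $(r_1,r_2,t_1,t_2)$ satisfy $t_1+t_2\equiv r_1+r_2 \bmod 2$, $|t_1-t_2|\le r_1-r_2 \le t_1+t_2\le r_1+r_2$. The set $\{\alpha\mathfrak{a}_2,\dots,\delta\mathfrak{b}_2\}$ is the set of all eight products of a parameter of $\Pi$ with a parameter of $\Sigma_2$. *)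

theory Defs
  imports Complex_Main "HOL-Computational_Algebra.Primes"
begin

text \<open>A p-adic valuation on the complex numbers (equivalently: on the algebraic
numbers via a fixed embedding into C_p), normalised by v(p) = 1.
Valuations are only considered on nonzero elements.\<close>
definition padic_valuation :: "nat \<Rightarrow> (complex \<Rightarrow> real) \<Rightarrow> bool" where
  "padic_valuation p v \<longleftrightarrow>
     (\<forall>x y. x \<noteq> 0 \<longrightarrow> y \<noteq> 0 \<longrightarrow> v (x * y) = v x + v y) \<and>
     (\<forall>x y. x \<noteq> 0 \<longrightarrow> y \<noteq> 0 \<longrightarrow> x + y \<noteq> 0 \<longrightarrow> v (x + y) \<ge> min (v x) (v y)) \<and>
     v (of_nat p) = 1"

definition root_of_unity :: "complex \<Rightarrow> bool" where
  "root_of_unity z \<longleftrightarrow> (\<exists>n::nat. n > 0 \<and> z ^ n = 1)"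

text \<open>Hecke parameters at p of a non-endoscopic non-CAP cuspidal representation Pi of GSp4
of weight (r1+3, r2+3), unramified at p (only the properties used are recorded), ordered by
valuation; the facts v(alpha) >= 0 and v(alpha beta) >= r2+1 from the context are included.\<close>
definition GSp4_parameters ::
  "nat \<Rightarrow> (complex \<Rightarrow> real) \<Rightarrow> nat \<Rightarrow> nat \<Rightarrow> complex \<Rightarrow> complex \<Rightarrow> complex \<Rightarrow> complex \<Rightarrow> complex \<Rightarrow> bool" where
  "GSp4_parameters p v r1 r2 \<alpha> \<beta> \<gamma> \<delta> \<chi> \<longleftrightarrow>
     r1 \<ge> r2 \<and>
     (\<forall>x\<in>{\<alpha>, \<beta>, \<gamma>, \<delta>}. cmod x = real p powr ((real r1 + real r2 + 3) / 2)) \<and>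
     root_of_unity \<chi> \<and>
     \<alpha> * \<delta> = of_nat p ^ (r1 + r2 + 3) * \<chi> \<and>
     \<beta> * \<gamma> = of_nat p ^ (r1 + r2 + 3) * \<chi> \<and>
     v \<alpha> \<le> v \<beta> \<and> v \<beta> \<le> v \<gamma> \<and> v \<gamma> \<le> v \<delta> \<and>
     v \<alpha> \<ge> 0 \<and> v (\<alpha> * \<beta>) \<ge> real r2 + 1"

definition Siegel_ordinary :: "(complex \<Rightarrow> real) \<Rightarrow> complex \<Rightarrow> bool" where
  "Siegel_ordinary v \<alpha> \<longleftrightarrow> v \<alpha> = 0"

definition Klingen_ordinary :: "(complex \<Rightarrow> real) \<Rightarrow> nat \<Rightarrow> complex \<Rightarrow> complex \<Rightarrow> bool" where
  "Klingen_ordinary v r2 \<alpha> \<beta> \<longleftrightarrow> v (\<alpha> * \<beta>) = real r2 + 1"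

definition Borel_ordinary :: "(complex \<Rightarrow> real) \<Rightarrow> nat \<Rightarrow> complex \<Rightarrow> complex \<Rightarrow> bool" where
  "Borel_ordinary v r2 \<alpha> \<beta> \<longleftrightarrow> Siegel_ordinary v \<alpha> \<and> Klingen_ordinary v r2 \<alpha> \<beta>"

text \<open>Hecke parameters at p of a holomorphic newform of weight t2+2 unramified at p,
labelled so that v(a) <= v(b); integrality v(a) >= 0 is recorded.\<close>
definition GL2_parameters ::
  "nat \<Rightarrow> (complex \<Rightarrow> real) \<Rightarrow> nat \<Rightarrow> complex \<Rightarrow> complex \<Rightarrow> complex \<Rightarrow> bool" where
  "GL2_parameters p v t2 a b \<chi> \<longleftrightarrow>
     cmod a = real p powr ((real t2 + 1) / 2) \<and>
     cmod b = real p powr ((real t2 + 1) / 2) \<and>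
     root_of_unity \<chi> \<and>
     a * b = of_nat p ^ (t2 + 1) * \<chi> \<and>
     v a \<le> v b \<and> v a \<ge> 0"

definition GL2_ordinary :: "(complex \<Rightarrow> real) \<Rightarrow> complex \<Rightarrow> bool" where
  "GL2_ordinary v a \<longleftrightarrow> v a = 0"

end

theory Submission
  imports Defs
begin

lemma val_mult: "padic_valuation p v \<Longrightarrow> x \<noteq> 0 \<Longrightarrow> y \<noteq> 0 \<Longrightarrow> v (x * y) = v x + v y"
  by (simp add: padic_valuation_def)

lemma val_one: "padic_valuation p v \<Longrightarrow> v 1 = 0"
  using val_mult[of p v 1 1] by simp

lemma val_pow: "padic_valuation p v \<Longrightarrow> z \<noteq> 0 \<Longrightarrow> v (z ^ n) = real n * v z"
  by (induction n) (auto simp: val_one val_mult algebra_simps)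

lemma val_p_pow: "padic_valuation p v \<Longrightarrow> prime p \<Longrightarrow> v (of_nat p ^ n) = real n"
  using val_pow[of p v "of_nat p" n] by (auto simp: padic_valuation_def prime_gt_0_nat)

lemma val_root: "padic_valuation p v \<Longrightarrow> root_of_unity z \<Longrightarrow> v z = 0"
proof -
  assume pv: "padic_valuation p v" and r: "root_of_unity z"
  then obtain n :: nat where n: "n > 0" "z ^ n = 1" by (auto simp: root_of_unity_def)
  then have "z \<noteq> 0" by (metis power_0_left zero_neq_one gr_implies_not0)
  then have "v (z ^ n) = real n * v z" using val_pow[OF pv] by blast
  with n val_one[OF pv] show "v z = 0" by simp
qed

lemma nz_of_cmod: "cmod x = real p powr e \<Longrightarrow> prime p \<Longrightarrow> x \<noteq> 0"
  using prime_gt_0_nat[of p] by auto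

theorem lemma3p8:
  fixes p r1 r2 t1 t2 :: nat
    and v :: "complex \<Rightarrow> real"
    and \<alpha> \<beta> \<gamma> \<delta> chiPi a2 b2 chiSigma x :: complex
  assumes "prime p"
    and "padic_valuation p v"
    and "GSp4_parameters p v r1 r2 \<alpha> \<beta> \<gamma> \<delta> chiPi"
    and "GL2_parameters p v t2 a2 b2 chiSigma"
    and "Klingen_ordinary v r2 \<alpha> \<beta>"
    and "t1 = 0" and "t2 = r1 - r2"
    and "x \<in> {\<alpha> * a2, \<alpha> * b2, \<beta> * a2, \<beta> * b2,
              \<gamma> * a2, \<gamma> * b2, \<delta> * a2, \<delta> * b2}"
    and "x = of_nat p ^ (r1 + 2)"
  shows "Borel_ordinary v r2 \<alpha> \<beta> \<and> GL2_ordinary v a2 \<and>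
         (x = \<beta> * b2 \<or> x = \<gamma> * a2)"
proof -
  note pv = assms(2) and pp = assms(1)
  note G = assms(3)[unfolded GSp4_parameters_def]
  note L = assms(4)[unfolded GL2_parameters_def]
  have r12: "r1 \<ge> r2" using G by blast
  have nz: "\<alpha> \<noteq> 0" "\<beta> \<noteq> 0" "\<gamma> \<noteq> 0" "\<delta> \<noteq> 0" "a2 \<noteq> 0" "b2 \<noteq> 0"
    using G L nz_of_cmod[OF _ pp] by auto
  have chz: "chiPi \<noteq> 0" "chiSigma \<noteq> 0"
    using G L by (auto simp: root_of_unity_def) (metis power_0_left zero_neq_one gr_implies_not0)+
  have vc: "v chiPi = 0" "v chiSigma = 0" using G L val_root[OF pv] by auto
  have pnz: "(of_nat p :: complex) ^ n \<noteq> 0" for n using prime_gt_0_nat[OF pp] by simp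
  have AD: "v \<alpha> + v \<delta> = real r1 + real r2 + 3"
  proof -
    have "v (\<alpha> * \<delta>) = v (of_nat p ^ (r1 + r2 + 3) * chiPi)" using G by simp
    also have "\<dots> = v (of_nat p ^ (r1 + r2 + 3)) + v chiPi" using val_mult[OF pv] chz pnz by blast
    also have "\<dots> = real r1 + real r2 + 3" using vc val_p_pow[OF pv pp] by simp
    finally show ?thesis using val_mult[OF pv] nz by simp
  qed
  have BC: "v \<beta> + v \<gamma> = real r1 + real r2 + 3"
  proof -
    have "v (\<beta> * \<gamma>) = v (of_nat p ^ (r1 + r2 + 3) * chiPi)" using G by simp
    also have "\<dots> = v (of_nat p ^ (r1 + r2 + 3)) + v chiPi" using val_mult[OF pv] chz pnz by blast
    also have "\<dots> = real r1 + real r2 + 3" using vc val_p_pow[OF pv pp] by simp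
    finally show ?thesis using val_mult[OF pv] nz by simp
  qed
  have ab: "v a2 + v b2 = real r1 - real r2 + 1"
  proof -
    have "v (a2 * b2) = v (of_nat p ^ (t2 + 1) * chiSigma)" using L by simp
    also have "\<dots> = v (of_nat p ^ (t2 + 1)) + v chiSigma" using val_mult[OF pv] chz pnz by blast
    also have "\<dots> = real r1 - real r2 + 1" using vc val_p_pow[OF pv pp, of "t2+1"] assms(7) r12 by (simp only: of_nat_diff of_nat_add)
    finally show ?thesis using val_mult[OF pv] nz by simp
  qed
  have K: "v \<alpha> + v \<beta> = real r2 + 1"
    using assms(5) val_mult[OF pv] nz by (simp add: Klingen_ordinary_def)
  have ord: "v \<alpha> \<le> v \<beta>" "v \<beta> \<le> v \<gamma>" "v \<gamma> \<le> v \<delta>" "v \<alpha> \<ge> 0" using G by auto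
  have ord2: "v a2 \<le> v b2" "v a2 \<ge> 0" using L by auto
  have vx: "v x = real r1 + 2" using val_p_pow[OF pv pp, of "r1+2"] assms(9) by simp
  have vm: "\<And>y z. y \<noteq> 0 \<Longrightarrow> z \<noteq> 0 \<Longrightarrow> v (y * z) = v y + v z" using val_mult[OF pv] by blast
  have c: "(x = \<beta> * b2 \<or> x = \<gamma> * a2) \<and> v \<alpha> = 0 \<and> v a2 = 0"
  proof -
    note facts = vx vm[OF nz(1) nz(5)] vm[OF nz(1) nz(6)] vm[OF nz(2) nz(5)] vm[OF nz(2) nz(6)]
      vm[OF nz(3) nz(5)] vm[OF nz(3) nz(6)] vm[OF nz(4) nz(5)] vm[OF nz(4) nz(6)]
      AD BC ab K ord ord2 of_nat_mono[OF r12, where ?'a=real]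
    from assms(8) consider "x = \<alpha> * a2" | "x = \<alpha> * b2" | "x = \<beta> * a2" | "x = \<beta> * b2"
      | "x = \<gamma> * a2" | "x = \<gamma> * b2" | "x = \<delta> * a2" | "x = \<delta> * b2" by blast
    then show ?thesis
    proof cases
      case 1 then have "v \<alpha> + v a2 = real r1 + 2" using facts by simp
      then have False using facts by linarith
      then show ?thesis by simp
    next case 2 then have "v \<alpha> + v b2 = real r1 + 2" using facts by simp
      then have False using facts by linarith
      then show ?thesis by simp
    next case 3 then have "v \<beta> + v a2 = real r1 + 2" using facts by simp
      then have False using facts by linarith
      then show ?thesis by simp
    next case 4 then have "v \<beta> + v b2 = real r1 + 2" using facts by simp
      then have "v \<alpha> = 0" "v a2 = 0" using facts by linarith+
      then show ?thesis using 4 by simp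
    next case 5 then have "v \<gamma> + v a2 = real r1 + 2" using facts by simp
      then have "v \<alpha> = 0" "v a2 = 0" using facts by linarith+
      then show ?thesis using 5 by simp
    next case 6 then have "v \<gamma> + v b2 = real r1 + 2" using facts by simp
      then have False using facts by linarith
      then show ?thesis by simp
    next case 7 then have "v \<delta> + v a2 = real r1 + 2" using facts by simp
      then have False using facts by linarith
      then show ?thesis by simp
    next case 8 then have "v \<delta> + v b2 = real r1 + 2" using facts by simp
      then have False using facts by linarith
      then show ?thesis by simp
    qed
  qed
  then show ?thesis using assms(5)
    by (simp add: Borel_ordinary_def Siegel_ordinary_def GL2_ordinary_def)
qed

end
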